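(* For every real $\alpha>0$ the series $\sum_{k=1}^{+\infty}\left(p^{(k)}_k\right)^{-\alpha}$ converges.
   Context: Let $p_n$ denote the $n$-th prime number. Define $p^{(0)}_n=n$ and recursively $p^{(k+1)}_n=p_{p^{(k)}_n}$ for $k\in\mathbb N_0$. *)

theory Defs
  imports "HOL-Analysis.Analysis" "HOL-Computational_Algebra.Primes"
begin

text \<open>The n-th prime, 1-indexed: nth_prime 1 = 2, nth_prime 2 = 3, ...
  It is the least prime p such that exactly n primes are \<le> p.
  (The value at n = 0 is irrelevant for the statement.)\<close>
definition nth_prime :: "nat \<Rightarrow> nat" where
  "nth_prime n = (LEAST p. prime p \<and> card {q. prime q \<and> q \<le> p} = n)"

text \<open>Iterated prime: iter_prime k n = p^{(k)}_n, with p^{(0)}_n = n and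
  p^{(k+1)}_n = p_{p^{(k)}_n}.\<close>
definition iter_prime :: "nat \<Rightarrow> nat \<Rightarrow> nat" where
  "iter_prime k n = (nth_prime ^^ k) n"

end

theory Submission
  imports Defs
begin

definition pic :: "nat \<Rightarrow> nat" where
  "pic m = card {q. prime q \<and> q \<le> m}"

lemma pic_Suc: "pic (Suc m) = (if prime (Suc m) then Suc (pic m) else pic m)"
proof -
  have fin: "finite {q. prime q \<and> q \<le> m}" by auto
  have "{q. prime q \<and> q \<le> Suc m} = (if prime (Suc m) then insert (Suc m) {q. prime q \<and> q \<le> m}
          else {q. prime q \<and> q \<le> m})" by (auto simp: le_Suc_eq)
  then show ?thesis using fin by (auto simp: pic_def)
qed

lemma pic_0: "pic 0 = 0"
  unfolding pic_def by (auto simp: prime_gt_0_nat)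

lemma pic_unbounded: "\<exists>m. pic m \<ge> n"
proof (induction n)
  case 0 then show ?case by auto
next
  case (Suc n)
  then obtain m where m: "pic m \<ge> n" by auto
  obtain p where p: "prime p" "p > m" using bigger_prime by blast
  have "pic m \<le> pic (p - 1)"
    unfolding pic_def using p by (intro card_mono) auto
  moreover have "pic p = Suc (pic (p - 1))"
    using pic_Suc[of "p - 1"] p prime_gt_0_nat[of p] by auto
  ultimately show ?case using m by (intro exI[of _ p]) auto
qed

lemma exists_prime_pic:
  assumes "n \<ge> 1" shows "\<exists>p. prime p \<and> pic p = n"
proof -
  define m where "m = (LEAST m. pic m \<ge> n)"
  have m1: "pic m \<ge> n" unfolding m_def using pic_unbounded by (rule LeastI_ex)
  have m0: "m \<noteq> 0" using m1 assms pic_0 by (cases m) auto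
  then obtain k where k: "m = Suc k" by (cases m) auto
  have "\<not> pic k \<ge> n" using k unfolding m_def
    by (metis Suc_n_not_le_n m_def Least_le)
  with m1 k pic_Suc[of k] show ?thesis by (auto split: if_splits intro: exI[of _ m])
qed

lemma nth_prime_prop:
  assumes "n \<ge> 1" shows "prime (nth_prime n) \<and> pic (nth_prime n) = n"
proof -
  have "\<exists>p::nat. prime p \<and> card {q. prime q \<and> q \<le> p} = n"
    using exists_prime_pic[OF assms] by (simp add: pic_def)
  then have "prime (nth_prime n) \<and> card {q. prime q \<and> q \<le> nth_prime n} = n"
    unfolding nth_prime_def by (rule LeastI_ex)
  then show ?thesis by (simp add: pic_def)
qed

lemma pic_bound: "2 * pic p \<le> p + 1"
proof -
  have "{q. prime q \<and> q \<le> p} \<subseteq> insert 2 ((\<lambda>i. 2*i+1) ` {1..(p - 1) div 2})"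
  proof
    fix q assume q: "q \<in> {q. prime q \<and> q \<le> p}"
    show "q \<in> insert 2 ((\<lambda>i. 2*i+1) ` {1..(p - 1) div 2})"
    proof (cases "q = 2")
      case False
      then have "odd q" using q prime_odd_nat[of q] prime_ge_2_nat[of q] by auto
      moreover have "q \<ge> 3" using q False prime_ge_2_nat[of q] by auto
      ultimately have "q = 2 * (q div 2) + 1" "q div 2 \<in> {1..(p - 1) div 2}"
        using q by (auto elim!: oddE)
      then show ?thesis by blast
    qed auto
  qed
  then have "pic p \<le> card (insert 2 ((\<lambda>i. 2*i+1) ` {1..(p - 1) div 2}))"
    unfolding pic_def by (intro card_mono) auto
  also have "\<dots> \<le> Suc (card ((\<lambda>i. 2*i+1) ` {1..(p - 1) div 2}))"
    by (simp add: card_insert_le_m1)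
  also have "\<dots> \<le> Suc (card {1..(p - 1) div 2})"
    using card_image_le by (metis Suc_le_mono finite_atLeastAtMost)
  finally have "pic p \<le> Suc ((p - 1) div 2)" by simp
  then show ?thesis using pic_0 by (cases p) auto
qed

lemma nth_prime_ge2: "n \<ge> 1 \<Longrightarrow> nth_prime n \<ge> 2"
  using nth_prime_prop prime_ge_2_nat by blast

lemma nth_prime_ge: "n \<ge> 1 \<Longrightarrow> 2 * n \<le> nth_prime n + 1"
  using nth_prime_prop pic_bound by metis

lemma iter_bound:
  assumes "n \<ge> 1" shows "real ((nth_prime ^^ Suc k) n) \<ge> 2 * (3/2) ^ k"
proof (induction k)
  case 0 then show ?case using nth_prime_ge2[OF assms] by simp
next
  case (Suc k)
  define m where "m = (nth_prime ^^ Suc k) n"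
  have m2: "real m \<ge> 2 * (3/2)^k" using Suc m_def by simp
  have "(2::real) \<le> 2 * (3/2)^k" by simp
  then have "m \<ge> 2" using m2 by linarith
  then have "2 * m \<le> nth_prime m + 1" "nth_prime m \<ge> 2" using nth_prime_ge nth_prime_ge2 by auto
  then have "2 * real (nth_prime m) \<ge> 3 * real m" using \<open>m \<ge> 2\<close> by linarith
  then have "real (nth_prime m) \<ge> 2 * (3/2)^Suc k" using m2 by simp
  then show ?case by (simp add: m_def)
qed

theorem theorem13:
  fixes \<alpha> :: real
  assumes "\<alpha> > 0"
  shows "summable (\<lambda>k::nat. (real (iter_prime (Suc k) (Suc k))) powr (- \<alpha>))"
proof (rule summable_comparison_test)
  have g: "summable (\<lambda>k. ((3/2::real) powr (- \<alpha>)) ^ k)"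
  proof (rule summable_geometric)
    have "(3/2::real) powr (- \<alpha>) < (3/2) powr 0"
      using assms by (intro powr_less_mono) auto
    moreover have "(3/2::real) powr 0 = 1" by simp
    moreover have "(3/2::real) powr (- \<alpha>) > 0" by simp
    ultimately show "norm ((3/2::real) powr (- \<alpha>)) < 1"
      unfolding real_norm_def by linarith
  qed
  show "summable (\<lambda>k. 2 powr (- \<alpha>) * ((3/2::real) powr (- \<alpha>)) ^ k)"
    by (rule summable_mult[OF g])
  show "\<exists>N. \<forall>n\<ge>N. norm (real (iter_prime (Suc n) (Suc n)) powr - \<alpha>) \<le> 2 powr (- \<alpha>) * ((3/2::real) powr (- \<alpha>)) ^ n"
  proof (intro exI allI impI)
    fix k :: nat
    have b: "real (iter_prime (Suc k) (Suc k)) \<ge> 2 * (3/2) ^ k"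
      unfolding iter_prime_def by (rule iter_bound) simp
    have "real (iter_prime (Suc k) (Suc k)) powr - \<alpha> \<le> (2 * (3/2) ^ k) powr - \<alpha>"
      using assms b by (intro powr_mono2') auto
    also have "\<dots> = 2 powr (- \<alpha>) * ((3/2::real) powr (- \<alpha>)) ^ k"
      by (simp add: powr_mult powr_power powr_realpow[symmetric] powr_powr mult.commute)
    finally show "norm (real (iter_prime (Suc k) (Suc k)) powr - \<alpha>) \<le> 2 powr (- \<alpha>) * ((3/2::real) powr (- \<alpha>)) ^ k"
      by simp
  qed
qed

end
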